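(* Let $X$ be an $X$-set parameter, let $G$ and $G'$ be graphs with no isolated vertices, and let $\tilde\varphi:\mathscr{X}^{\rm TAR}(G)\to\mathscr{X}^{\rm TAR}(G')$ be a graph isomorphism. Then $R'=V(G')\setminus\tilde\varphi(V(G))$ is an $X$-irrelevant set of $G'$, and $\varphi=\nu_{R'}\circ\tilde\varphi$ is an isomorphism from $\mathscr{X}^{\rm TAR}(G)$ to $\mathscr{X}^{\rm TAR}(G')$ such that $|\varphi(S)|=|S|$ for every vertex $S$ of $\mathscr{X}^{\rm TAR}(G)$.
   Context: All graphs are simple, finite, with nonempty vertex set. An $X$-set parameter is a graph parameter $X(G)$ defined as the minimum cardinality of an $X$-set of $G$, where the $X$-sets of each graph are subsets of its vertex set determined by some property satisfying: (1) supersets (within $V(G)$) of $X$-sets are $X$-sets; (2) the empty set is never an $X$-set; (3) an $X$-set of a disconnected graph is the union of an $X$-set of each component; (4) if $G$ has no isolated vertices, every set of $|V(G)|-1$ vertices is an $X$-set. The $X$-TAR graph $\mathscr{X}^{\rm TAR}(G)$ has as vertices all $X$-sets of $G$, with $S_1,S_2$ adjacent iff $|S_1\ominus S_2|=1$ (symmetric difference). A vertex $v$ of $G$ is $X$-irrelevant if $v\notin S$ for every minimal $X$-set $S$ of $G$; a set $R\subseteq V(G)$ is $X$-irrelevant if all its vertices are. For $R\subseteq V(G)$, $\nu_R$ is the map on $X$-sets of $G$ given by $\nu_R(S)=S\ominus R$. *)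

theory Defs
  imports Main
begin

definition sgraph :: "'v set \<Rightarrow> ('v \<times> 'v) set \<Rightarrow> bool" where
  "sgraph V E \<longleftrightarrow> finite V \<and> V \<noteq> {} \<and> E \<subseteq> V \<times> V \<and> sym E \<and> irrefl E"

definition no_isolated :: "'v set \<Rightarrow> ('v \<times> 'v) set \<Rightarrow> bool" where
  "no_isolated V E \<longleftrightarrow> (\<forall>v\<in>V. \<exists>u. (v, u) \<in> E)"

definition induced :: "'v set \<Rightarrow> ('v \<times> 'v) set \<Rightarrow> ('v \<times> 'v) set" where
  "induced C E = E \<inter> (C \<times> C)"

definition components :: "'v set \<Rightarrow> ('v \<times> 'v) set \<Rightarrow> 'v set set" where
  "components V E = {(E\<^sup>*) `` {v} | v. v \<in> V}"

definition gconnected :: "'v set \<Rightarrow> ('v \<times> 'v) set \<Rightarrow> bool" where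
  "gconnected V E \<longleftrightarrow> (\<forall>u\<in>V. \<forall>v\<in>V. (u, v) \<in> E\<^sup>*)"

definition Xset_param :: "('v set \<Rightarrow> ('v \<times> 'v) set \<Rightarrow> 'v set set) \<Rightarrow> bool" where
  "Xset_param Xs \<longleftrightarrow> (\<forall>V E. sgraph V E \<longrightarrow>
      (\<forall>S\<in>Xs V E. S \<subseteq> V)
    \<and> (\<forall>S T. S \<in> Xs V E \<longrightarrow> S \<subseteq> T \<longrightarrow> T \<subseteq> V \<longrightarrow> T \<in> Xs V E)
    \<and> {} \<notin> Xs V E
    \<and> (\<not> gconnected V E \<longrightarrow> (\<forall>S. S \<in> Xs V E \<longleftrightarrow>
          (\<exists>f. (\<forall>C\<in>components V E. f C \<in> Xs C (induced C E))
               \<and> S = \<Union>(f ` components V E))))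
    \<and> (no_isolated V E \<longrightarrow> (\<forall>S. S \<subseteq> V \<longrightarrow> card S = card V - 1 \<longrightarrow> S \<in> Xs V E)))"

definition symdiff :: "'a set \<Rightarrow> 'a set \<Rightarrow> 'a set" where
  "symdiff A B = (A - B) \<union> (B - A)"

text \<open>Adjacency in the X-TAR graph (whose vertex set is Xs V E).\<close>
definition tar_adj :: "'v set \<Rightarrow> 'v set \<Rightarrow> bool" where
  "tar_adj S1 S2 \<longleftrightarrow> card (symdiff S1 S2) = 1"

definition tar_iso ::
  "('v set \<Rightarrow> ('v \<times> 'v) set \<Rightarrow> 'v set set) \<Rightarrow> 'v set \<Rightarrow> ('v \<times> 'v) set
    \<Rightarrow> 'v set \<Rightarrow> ('v \<times> 'v) set \<Rightarrow> ('v set \<Rightarrow> 'v set) \<Rightarrow> bool" where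
  "tar_iso Xs V E V' E' \<phi> \<longleftrightarrow> bij_betw \<phi> (Xs V E) (Xs V' E')
     \<and> (\<forall>S1\<in>Xs V E. \<forall>S2\<in>Xs V E. tar_adj S1 S2 \<longleftrightarrow> tar_adj (\<phi> S1) (\<phi> S2))"

definition minimal_Xset where
  "minimal_Xset Xs V E S \<longleftrightarrow> S \<in> Xs V E \<and> (\<forall>T. T \<subset> S \<longrightarrow> T \<notin> Xs V E)"

definition X_irrelevant_vertex where
  "X_irrelevant_vertex Xs V E v \<longleftrightarrow> v \<in> V \<and> (\<forall>S. minimal_Xset Xs V E S \<longrightarrow> v \<notin> S)"

definition X_irrelevant_set where
  "X_irrelevant_set Xs V E R \<longleftrightarrow> R \<subseteq> V \<and> (\<forall>v\<in>R. X_irrelevant_vertex Xs V E v)"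

definition nu :: "'v set \<Rightarrow> 'v set \<Rightarrow> 'v set" where
  "nu R S = symdiff S R"

end

theory Submission
  imports Defs
begin

definition upfam :: "'v set \<Rightarrow> 'v set set \<Rightarrow> bool" where
  "upfam V U \<longleftrightarrow> finite V \<and> (\<forall>S\<in>U. S \<subseteq> V) \<and> (\<forall>S T. S\<in>U \<longrightarrow> S \<subseteq> T \<longrightarrow> T \<subseteq> V \<longrightarrow> T \<in> U)
     \<and> (\<forall>v\<in>V. V - {v} \<in> U) \<and> V \<in> U"

definition isoU :: "('v set \<Rightarrow> 'v set) \<Rightarrow> 'v set set \<Rightarrow> 'v set set \<Rightarrow> bool" where
  "isoU \<phi> U U' \<longleftrightarrow> bij_betw \<phi> U U' \<and> (\<forall>S1\<in>U. \<forall>S2\<in>U. tar_adj S1 S2 \<longleftrightarrow> tar_adj (\<phi> S1) (\<phi> S2))"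

lemma upfam_of:
  assumes "Xset_param Xs" "sgraph V E" "no_isolated V E"
  shows "upfam V (Xs V E)"
proof -
  note Q0 = assms(1)[unfolded Xset_param_def]
  note Q = mp[OF spec[OF spec[OF Q0, of V], of E] assms(2)]
  note P1 = Q[THEN conjunct1]
  note P2 = Q[THEN conjunct2, THEN conjunct1]
  note P5 = mp[OF Q[THEN conjunct2, THEN conjunct2, THEN conjunct2, THEN conjunct2] assms(3)]
  have fin: "finite V" and ne: "V \<noteq> {}" using assms(2) unfolding sgraph_def by auto
  have A: "\<forall>v\<in>V. V - {v} \<in> Xs V E"
  proof
    fix v assume v: "v \<in> V"
    have "card (V - {v}) = card V - 1" using fin v by (simp add: card_Diff_singleton)
    moreover have "V - {v} \<subseteq> V" by blast
    ultimately show "V - {v} \<in> Xs V E" using P5 by simp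
  qed
  obtain v where v: "v \<in> V" using ne by auto
  have "V - {v} \<in> Xs V E" using A v by simp
  hence "V \<in> Xs V E" using P2 by blast
  thus ?thesis unfolding upfam_def using P1 P2 A fin by (intro conjI)
qed

lemma sd_sd: "symdiff S (symdiff S T) = T"
  by (auto simp: symdiff_def)

lemma adj_iff: "tar_adj S T \<longleftrightarrow> (\<exists>u. T = symdiff S {u})"
proof
  assume "tar_adj S T"
  then obtain u where "symdiff S T = {u}" unfolding tar_adj_def by (rule card_1_singletonE)
  hence "T = symdiff S {u}" using sd_sd[of S T] by simp
  thus "\<exists>u. T = symdiff S {u}" by blast
next
  assume "\<exists>u. T = symdiff S {u}"
  then obtain u where "T = symdiff S {u}" by blast
  hence "symdiff S T = {u}" using sd_sd[of S "{u}"] by simp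
  thus "tar_adj S T" unfolding tar_adj_def by simp
qed

lemma adjE: "tar_adj S T \<Longrightarrow> (\<And>u. T = symdiff S {u} \<Longrightarrow> P) \<Longrightarrow> P"
  using adj_iff by metis

lemma adjI: "T = symdiff S {u} \<Longrightarrow> tar_adj S T"
  using adj_iff by metis

lemma sd_assoc1: "symdiff (symdiff T {u}) W = symdiff (symdiff T W) {u}"
  by (auto simp: symdiff_def)

lemma card_sd_single:
  assumes "finite A"
  shows "card (symdiff A {u}) = (if u \<in> A then card A - 1 else card A + 1)"
proof (cases "u \<in> A")
  case True
  hence "symdiff A {u} = A - {u}" by (auto simp: symdiff_def)
  then show ?thesis using True assms by simp
next
  case False
  hence "symdiff A {u} = insert u A" by (auto simp: symdiff_def)
  then show ?thesis using False assms by simp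
qed

lemma fin_sd: "finite A \<Longrightarrow> finite B \<Longrightarrow> finite (symdiff A B)"
  by (simp add: symdiff_def)

lemma sd_empty_iff: "symdiff A B = {} \<longleftrightarrow> A = B"
  by (auto simp: symdiff_def)

lemma dist_le:
  fixes h1 h2 :: "'a \<Rightarrow> nat"
  assumes "\<forall>x\<in>A. h1 x = 0 \<longleftrightarrow> x = a"
    and "\<forall>x\<in>A. h2 x = 0 \<longleftrightarrow> x = a"
    and "\<forall>x\<in>A. \<forall>y\<in>A. adj x y \<longrightarrow> h1 x \<le> h1 y + 1"
    and "\<forall>x\<in>A. x \<noteq> a \<longrightarrow> (\<exists>y\<in>A. adj x y \<and> h2 y < h2 x)"
  shows "\<forall>x\<in>A. h1 x \<le> h2 x"
proof -
  have "\<forall>x\<in>A. h2 x = k \<longrightarrow> h1 x \<le> k" for k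
  proof (induction k rule: less_induct)
    case (less k)
    show ?case
    proof (intro ballI impI)
      fix x assume x: "x \<in> A" "h2 x = k"
      show "h1 x \<le> k"
      proof (cases "x = a")
        case True thus ?thesis using assms(1) x by auto
      next
        case False
        then obtain y where y: "y \<in> A" "adj x y" "h2 y < h2 x" using assms(4) x by blast
        have "h1 y \<le> h2 y" using less y x by blast
        moreover have "h1 x \<le> h1 y + 1" using assms(3) x y by blast
        ultimately show ?thesis using y x by linarith
      qed
    qed
  qed
  thus ?thesis by blast
qed

lemma upfamD:
  assumes "upfam V U"
  shows "finite V" "\<And>S. S \<in> U \<Longrightarrow> S \<subseteq> V" "\<And>S T. S \<in> U \<Longrightarrow> S \<subseteq> T \<Longrightarrow> T \<subseteq> V \<Longrightarrow> T \<in> U"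
    "\<And>v. v \<in> V \<Longrightarrow> V - {v} \<in> U" "V \<in> U"
  using assms unfolding upfam_def by blast+

lemma bij_surj_obtain:
  assumes "bij_betw f A B" "z \<in> B"
  shows "\<exists>y\<in>A. z = f y"
proof -
  have "z \<in> f ` A" using assms bij_betw_imp_surj_on by metis
  thus ?thesis by (rule imageE) blast
qed

lemma step_card:
  assumes "finite T" "finite W" "z = symdiff T {u}"
  shows "card (symdiff T W) \<le> card (symdiff z W) + 1"
    "card (symdiff z W) \<le> card (symdiff T W) + 1"
    "card (symdiff z W) < card (symdiff T W) \<longleftrightarrow> u \<in> symdiff T W"
proof -
  have f: "finite (symdiff T W)" using assms fin_sd by blast
  have e: "card (symdiff z W) = (if u \<in> symdiff T W then card (symdiff T W) - 1 else card (symdiff T W) + 1)"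
    unfolding assms(3) sd_assoc1[of T u W] by (rule card_sd_single[OF f])
  have "u \<in> symdiff T W \<Longrightarrow> card (symdiff T W) > 0" using f card_gt_0_iff by blast
  thus "card (symdiff T W) \<le> card (symdiff z W) + 1"
    "card (symdiff z W) \<le> card (symdiff T W) + 1"
    "card (symdiff z W) < card (symdiff T W) \<longleftrightarrow> u \<in> symdiff T W"
    using e by auto
qed

lemma descent:
  assumes "upfam V' U'" "W \<in> U'" "T \<in> U'" "T \<noteq> W"
  shows "\<exists>z\<in>U'. tar_adj T z \<and> card (symdiff z W) < card (symdiff T W)"
proof -
  note D' = upfamD[OF assms(1)]
  note D = D'
  have fT: "finite T" "finite W"
    using finite_subset[OF D(2)[OF assms(3)] D(1)] finite_subset[OF D(2)[OF assms(2)] D(1)] by auto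
  show ?thesis
  proof (cases "W - T = {}")
    case False
    then obtain u where u: "u \<in> W" "u \<notin> T" by blast
    define z where "z = symdiff T {u}"
    have "z = insert u T" using u unfolding z_def symdiff_def by auto
    moreover have "insert u T \<subseteq> V'" using D(2)[OF assms(2)] D(2)[OF assms(3)] u by blast
    ultimately have "z \<in> U'" using D(3)[OF assms(3) subset_insertI] by simp
    moreover have "tar_adj T z" using z_def by (rule adjI)
    moreover have "u \<in> symdiff T W" using u by (auto simp: symdiff_def)
    ultimately show ?thesis using step_card(3)[OF fT z_def] by blast
  next
    case True
    hence "W \<subset> T" using assms(4) by blast
    then obtain u where u: "u \<in> T" "u \<notin> W" by blast
    define z where "z = symdiff T {u}"
    have "z = T - {u}" using u unfolding z_def symdiff_def by auto
    moreover have "W \<subseteq> T - {u}" using \<open>W \<subset> T\<close> u by blast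
    moreover have "T - {u} \<subseteq> V'" using D'(2)[OF assms(3)] by blast
    ultimately have "z \<in> U'" using D'(3)[OF assms(2)] by simp
    moreover have "tar_adj T z" using z_def by (rule adjI)
    moreover have "u \<in> symdiff T W" using u by (auto simp: symdiff_def)
    ultimately show ?thesis using step_card(3)[OF fT z_def] by blast
  qed
qed

lemma distprops:
  assumes "upfam V U" "upfam V' U'" "isoU \<phi> U U'"
  defines "h \<equiv> \<lambda>x. card (symdiff (\<phi> x) (\<phi> V))"
  shows "\<forall>x\<in>U. h x = 0 \<longleftrightarrow> x = V"
    "\<forall>x\<in>U. \<forall>y\<in>U. tar_adj x y \<longrightarrow> h x \<le> h y + 1"
    "\<forall>x\<in>U. x \<noteq> V \<longrightarrow> (\<exists>y\<in>U. tar_adj x y \<and> h y < h x)"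
proof -
  note D = upfamD[OF assms(1)] and D' = upfamD[OF assms(2)]
  have bij: "bij_betw \<phi> U U'" and adj: "\<forall>S1\<in>U. \<forall>S2\<in>U. tar_adj S1 S2 \<longleftrightarrow> tar_adj (\<phi> S1) (\<phi> S2)"
    using assms(3) unfolding isoU_def by auto
  have inU': "\<And>x. x \<in> U \<Longrightarrow> \<phi> x \<in> U'" using bij bij_betwE by blast
  have injU: "inj_on \<phi> U" using bij bij_betw_def by blast
  have fin: "\<And>x. x \<in> U \<Longrightarrow> finite (\<phi> x)"
    using finite_subset[OF D'(2)[OF inU'] D'(1)] by blast
  have WU: "\<phi> V \<in> U'" using inU' D(5) by blast
  show "\<forall>x\<in>U. h x = 0 \<longleftrightarrow> x = V"
  proof
    fix x assume x: "x \<in> U"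
    have "h x = 0 \<longleftrightarrow> symdiff (\<phi> x) (\<phi> V) = {}"
      unfolding h_def using fin_sd[OF fin[OF x] fin[OF D(5)]] by (rule card_0_eq)
    also have "\<dots> \<longleftrightarrow> \<phi> x = \<phi> V" by (rule sd_empty_iff)
    also have "\<dots> \<longleftrightarrow> x = V" using inj_on_eq_iff[OF injU x D(5)] .
    finally show "h x = 0 \<longleftrightarrow> x = V" .
  qed
  show "\<forall>x\<in>U. \<forall>y\<in>U. tar_adj x y \<longrightarrow> h x \<le> h y + 1"
  proof (intro ballI impI)
    fix x y assume xy: "x \<in> U" "y \<in> U" "tar_adj x y"
    hence "tar_adj (\<phi> x) (\<phi> y)" using adj by blast
    then obtain u where "\<phi> y = symdiff (\<phi> x) {u}" by (rule adjE)
    from step_card(1)[OF fin[OF xy(1)] fin[OF D(5)] this] show "h x \<le> h y + 1" unfolding h_def .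
  qed
  show "\<forall>x\<in>U. x \<noteq> V \<longrightarrow> (\<exists>y\<in>U. tar_adj x y \<and> h y < h x)"
  proof (intro ballI impI)
    fix x assume x: "x \<in> U" "x \<noteq> V"
    hence "\<phi> x \<noteq> \<phi> V" using inj_on_eq_iff[OF injU x(1) D(5)] by simp
    then obtain z where z: "z \<in> U'" "tar_adj (\<phi> x) z" "card (symdiff z (\<phi> V)) < card (symdiff (\<phi> x) (\<phi> V))"
      using descent[OF assms(2) WU inU'[OF x(1)]] by blast
    obtain y where y: "y \<in> U" "z = \<phi> y" using bij_surj_obtain[OF bij z(1)] by blast
    have "tar_adj x y \<longleftrightarrow> tar_adj (\<phi> x) (\<phi> y)" using adj x(1) y(1) by blast
    hence "tar_adj x y" using z(2) y(2) by simp
    moreover have "h y < h x" unfolding h_def using y z by simp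
    ultimately show "\<exists>y\<in>U. tar_adj x y \<and> h y < h x" using y by blast
  qed
qed

lemma isoU_id: "isoU id U U"
  unfolding isoU_def by simp

lemma dist_eq:
  assumes "upfam V U" "upfam V' U'" "isoU \<phi> U U'"
  shows "\<forall>x\<in>U. card (symdiff (\<phi> x) (\<phi> V)) = card (symdiff x V)"
proof -
  note A = distprops[OF assms]
  note B = distprops[OF assms(1) assms(1) isoU_id, unfolded id_apply]
  have 1: "\<forall>x\<in>U. card (symdiff x V) \<le> card (symdiff (\<phi> x) (\<phi> V))"
    by (rule dist_le[OF B(1) A(1) B(2) A(3)])
  have 2: "\<forall>x\<in>U. card (symdiff (\<phi> x) (\<phi> V)) \<le> card (symdiff x V)"
    by (rule dist_le[OF A(1) B(1) A(2) B(3)])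
  show ?thesis using 1 2 by (meson antisym)
qed

lemma sd_single_inj: "symdiff T {u} = symdiff T {v} \<Longrightarrow> u = v"
proof -
  assume a: "symdiff T {u} = symdiff T {v}"
  have "symdiff T (symdiff T {u}) = symdiff T (symdiff T {v})" using a by simp
  hence "{u} = {v}" by (simp only: sd_sd)
  thus "u = v" by simp
qed

lemma Nminus_card:
  assumes "upfam V' U'" "T \<in> U'" "W \<subseteq> V'"
  shows "card {z\<in>U'. tar_adj T z \<and> card (symdiff z W) < card (symdiff T W)}
       = card {u \<in> symdiff T W. symdiff T {u} \<in> U'}"
proof -
  note D = upfamD[OF assms(1)]
  have fT: "finite T" "finite W"
    using finite_subset[OF D(2)[OF assms(2)] D(1)] finite_subset[OF assms(3) D(1)] by auto
  have "{z\<in>U'. tar_adj T z \<and> card (symdiff z W) < card (symdiff T W)}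
       = (\<lambda>u. symdiff T {u}) ` {u \<in> symdiff T W. symdiff T {u} \<in> U'}"
  proof (intro equalityI subsetI)
    fix z assume "z \<in> {z\<in>U'. tar_adj T z \<and> card (symdiff z W) < card (symdiff T W)}"
    hence z: "z \<in> U'" "tar_adj T z" "card (symdiff z W) < card (symdiff T W)" by auto
    obtain u where u: "z = symdiff T {u}" by (rule adjE[OF z(2)])
    have "u \<in> symdiff T W" using step_card(3)[OF fT u] z by simp
    thus "z \<in> (\<lambda>u. symdiff T {u}) ` {u \<in> symdiff T W. symdiff T {u} \<in> U'}" using u z by blast
  next
    fix z assume "z \<in> (\<lambda>u. symdiff T {u}) ` {u \<in> symdiff T W. symdiff T {u} \<in> U'}"
    then obtain u where u: "z = symdiff T {u}" "u \<in> symdiff T W" "z \<in> U'" by blast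
    have "tar_adj T z" by (rule adjI[OF u(1)])
    moreover have "card (symdiff z W) < card (symdiff T W)" using step_card(3)[OF fT u(1)] u by simp
    ultimately show "z \<in> {z\<in>U'. tar_adj T z \<and> card (symdiff z W) < card (symdiff T W)}" using u by blast
  qed
  moreover have "inj_on (\<lambda>u. symdiff T {u}) {u \<in> symdiff T W. symdiff T {u} \<in> U'}"
    by (rule inj_onI) (rule sd_single_inj)
  ultimately show ?thesis by (simp add: card_image)
qed

lemma transfer_card:
  assumes "isoU \<phi> U U'" "x \<in> U" "\<forall>y\<in>U. P y \<longleftrightarrow> Q (\<phi> y)"
  shows "card {y\<in>U. tar_adj x y \<and> P y} = card {z\<in>U'. tar_adj (\<phi> x) z \<and> Q z}"
proof -
  have bij: "bij_betw \<phi> U U'" and adj: "\<forall>S1\<in>U. \<forall>S2\<in>U. tar_adj S1 S2 \<longleftrightarrow> tar_adj (\<phi> S1) (\<phi> S2)"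
    using assms(1) unfolding isoU_def by auto
  have adj2: "\<And>y. y \<in> U \<Longrightarrow> tar_adj x y \<longleftrightarrow> tar_adj (\<phi> x) (\<phi> y)"
    using adj assms(2) by blast
  have PQ: "\<And>y. y \<in> U \<Longrightarrow> P y \<longleftrightarrow> Q (\<phi> y)" using assms(3) by blast
  have inU': "\<And>y. y \<in> U \<Longrightarrow> \<phi> y \<in> U'" using bij bij_betwE by blast
  have eq: "\<phi> ` {y\<in>U. tar_adj x y \<and> P y} = {z\<in>U'. tar_adj (\<phi> x) z \<and> Q z}"
  proof (intro equalityI subsetI)
    fix z assume "z \<in> \<phi> ` {y\<in>U. tar_adj x y \<and> P y}"
    then obtain y where y: "y \<in> U" "tar_adj x y" "P y" "z = \<phi> y" by blast
    have "\<phi> y \<in> U'" by (rule inU'[OF y(1)])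
    moreover have "tar_adj (\<phi> x) (\<phi> y)" using adj2[OF y(1)] y(2) by simp
    moreover have "Q (\<phi> y)" using PQ[OF y(1)] y(3) by simp
    ultimately show "z \<in> {z\<in>U'. tar_adj (\<phi> x) z \<and> Q z}" unfolding y(4) by simp
  next
    fix z assume "z \<in> {z\<in>U'. tar_adj (\<phi> x) z \<and> Q z}"
    hence z: "z \<in> U'" "tar_adj (\<phi> x) z" "Q z" by auto
    obtain y where y: "y \<in> U" "z = \<phi> y" using bij_surj_obtain[OF bij z(1)] by blast
    have "tar_adj x y" using adj2[OF y(1)] z(2) unfolding y(2) by simp
    moreover have "P y" using PQ[OF y(1)] z(3) unfolding y(2) by simp
    ultimately show "z \<in> \<phi> ` {y\<in>U. tar_adj x y \<and> P y}" unfolding y(2) using y(1) by blast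
  qed
  have inj: "inj_on \<phi> {y\<in>U. tar_adj x y \<and> P y}"
    using bij_betw_imp_inj_on[OF bij] by (rule inj_on_subset) blast
  have "card (\<phi> ` {y\<in>U. tar_adj x y \<and> P y}) = card {y\<in>U. tar_adj x y \<and> P y}"
    by (rule card_image[OF inj])
  thus ?thesis unfolding eq by (rule sym)
qed

lemma deg_le:
  assumes "upfam V U" "x \<in> U"
  shows "card {y\<in>U. tar_adj x y \<and> True} \<le> card V"
proof -
  note D = upfamD[OF assms(1)]
  have "{y\<in>U. tar_adj x y \<and> True} \<subseteq> (\<lambda>u. symdiff x {u}) ` V"
  proof (rule subsetI)
    fix y assume "y \<in> {y\<in>U. tar_adj x y \<and> True}"
    hence y: "y \<in> U" "tar_adj x y" by auto
    obtain u where u: "y = symdiff x {u}" by (rule adjE[OF y(2)])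
    have "u \<in> V"
    proof (rule ccontr)
      assume "u \<notin> V"
      hence "u \<in> y" using u D(2)[OF assms(2)] by (auto simp: symdiff_def)
      thus False using D(2)[OF y(1)] \<open>u \<notin> V\<close> by blast
    qed
    thus "y \<in> (\<lambda>u. symdiff x {u}) ` V" using u by blast
  qed
  hence "card {y\<in>U. tar_adj x y \<and> True} \<le> card ((\<lambda>u. symdiff x {u}) ` V)"
    by (rule card_mono[OF finite_imageI[OF D(1)]])
  moreover have "card ((\<lambda>u. symdiff x {u}) ` V) \<le> card V" using D(1) by (rule card_image_le)
  ultimately show ?thesis by linarith
qed

lemma deg_top:
  assumes "upfam V U"
  shows "card {y\<in>U. tar_adj V y \<and> True} = card V"
proof -
  note D = upfamD[OF assms(1)]
  have "{y\<in>U. tar_adj V y \<and> True} = (\<lambda>u. symdiff V {u}) ` V"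
  proof (intro equalityI subsetI)
    fix y assume "y \<in> {y\<in>U. tar_adj V y \<and> True}"
    hence y: "y \<in> U" "tar_adj V y" by auto
    obtain u where u: "y = symdiff V {u}" by (rule adjE[OF y(2)])
    have "u \<in> V"
    proof (rule ccontr)
      assume "u \<notin> V"
      hence "u \<in> y" using u by (auto simp: symdiff_def)
      thus False using D(2)[OF y(1)] \<open>u \<notin> V\<close> by blast
    qed
    thus "y \<in> (\<lambda>u. symdiff V {u}) ` V" using u by blast
  next
    fix y assume "y \<in> (\<lambda>u. symdiff V {u}) ` V"
    then obtain u where u: "u \<in> V" "y = symdiff V {u}" by blast
    have "y = V - {u}" using u by (auto simp: symdiff_def)
    hence "y \<in> U" using D(4) u by simp
    moreover have "tar_adj V y" by (rule adjI[OF u(2)])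
    ultimately show "y \<in> {y\<in>U. tar_adj V y \<and> True}" by blast
  qed
  moreover have "inj_on (\<lambda>u. symdiff V {u}) V" by (rule inj_onI) (rule sd_single_inj)
  ultimately show ?thesis by (simp add: card_image)
qed

lemma main_abs:
  assumes "upfam V U" "upfam V' U'" "isoU \<phi> U U'"
  shows "\<forall>T\<in>U'. \<forall>u\<in>T - \<phi> V. T - {u} \<in> U'"
    "card V = card V'"
    "\<forall>x\<in>U. card (symdiff (\<phi> x) (\<phi> V)) = card (symdiff x V)"
proof -
  note D = upfamD[OF assms(1)] and D' = upfamD[OF assms(2)]
  have bij: "bij_betw \<phi> U U'" using assms(3) unfolding isoU_def by auto
  have inU': "\<And>x. x \<in> U \<Longrightarrow> \<phi> x \<in> U'" using bij bij_betwE by blast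
  have WU: "\<phi> V \<in> U'" using inU' D(5) by blast
  have WV: "\<phi> V \<subseteq> V'" using D'(2) WU by blast
  note de = dist_eq[OF assms]
  show "\<forall>x\<in>U. card (symdiff (\<phi> x) (\<phi> V)) = card (symdiff x V)" by (rule de)
  show "\<forall>T\<in>U'. \<forall>u\<in>T - \<phi> V. T - {u} \<in> U'"
  proof (intro ballI)
    fix T u assume T: "T \<in> U'" and u: "u \<in> T - \<phi> V"
    obtain x where x: "x \<in> U" "T = \<phi> x" using bij_surj_obtain[OF bij T] by blast
    let ?P = "\<lambda>y. card (symdiff y V) < card (symdiff x V)"
    let ?Q = "\<lambda>z. card (symdiff z (\<phi> V)) < card (symdiff T (\<phi> V))"
    have PQ: "\<forall>y\<in>U. ?P y \<longleftrightarrow> ?Q (\<phi> y)" using de x by simp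
    have c1: "card {y\<in>U. tar_adj x y \<and> ?P y} = card {u \<in> symdiff x V. symdiff x {u} \<in> U}"
      using Nminus_card[OF assms(1) x(1)] by simp
    have "{u \<in> symdiff x V. symdiff x {u} \<in> U} = symdiff x V"
    proof -
      have "\<forall>u \<in> symdiff x V. symdiff x {u} \<in> U"
      proof
        fix u assume "u \<in> symdiff x V"
        hence "u \<in> V" "u \<notin> x" using D(2)[OF x(1)] by (auto simp: symdiff_def)
        hence "symdiff x {u} = insert u x" by (auto simp: symdiff_def)
        moreover have "insert u x \<in> U" by (rule D(3)[OF x(1)]) (use D(2)[OF x(1)] \<open>u \<in> V\<close> in auto)
        ultimately show "symdiff x {u} \<in> U" by simp
      qed
      thus ?thesis by blast
    qed
    hence c1': "card {y\<in>U. tar_adj x y \<and> ?P y} = card (symdiff x V)" using c1 by simp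
    have c2: "card {y\<in>U. tar_adj x y \<and> ?P y} = card {z\<in>U'. tar_adj T z \<and> ?Q z}"
      using transfer_card[OF assms(3) x(1) PQ] x by simp
    have c3: "card {z\<in>U'. tar_adj T z \<and> ?Q z} = card {u \<in> symdiff T (\<phi> V). symdiff T {u} \<in> U'}"
      by (rule Nminus_card[OF assms(2) T WV])
    have dex: "card (symdiff T (\<phi> V)) = card (symdiff x V)" using de x by simp
    have "card {u \<in> symdiff T (\<phi> V). symdiff T {u} \<in> U'} = card (symdiff T (\<phi> V))"
      using c1' c2 c3 dex by linarith
    moreover have "finite (symdiff T (\<phi> V))"
      by (rule fin_sd[OF finite_subset[OF D'(2)[OF T] D'(1)] finite_subset[OF WV D'(1)]])
    ultimately have eq: "{u \<in> symdiff T (\<phi> V). symdiff T {u} \<in> U'} = symdiff T (\<phi> V)"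
      by (rule_tac card_subset_eq) auto
    have "u \<in> symdiff T (\<phi> V)" using u by (auto simp: symdiff_def)
    hence "u \<in> {u \<in> symdiff T (\<phi> V). symdiff T {u} \<in> U'}" by (subst eq)
    hence "symdiff T {u} \<in> U'" by simp
    moreover have "symdiff T {u} = T - {u}" using u by (auto simp: symdiff_def)
    ultimately show "T - {u} \<in> U'" by simp
  qed
  have "card V = card {y\<in>U. tar_adj V y \<and> True}" using deg_top[OF assms(1)] by simp
  also have "\<dots> = card {z\<in>U'. tar_adj (\<phi> V) z \<and> True}"
    by (rule transfer_card[OF assms(3) D(5)]) simp
  also have "\<dots> \<le> card V'" by (rule deg_le[OF assms(2) WU])
  finally have le1: "card V \<le> card V'" .
  obtain x where x: "x \<in> U" "V' = \<phi> x" using bij_surj_obtain[OF bij D'(5)] by blast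
  have "card V' = card {z\<in>U'. tar_adj (\<phi> x) z \<and> True}" using deg_top[OF assms(2)] x by simp
  also have "\<dots> = card {y\<in>U. tar_adj x y \<and> True}"
    by (rule transfer_card[OF assms(3) x(1), symmetric]) simp
  also have "\<dots> \<le> card V" by (rule deg_le[OF assms(1) x(1)])
  finally show "card V = card V'" using le1 by simp
qed


lemma nu_invol: "nu R (nu R S) = S"
  by (auto simp: nu_def symdiff_def)

lemma nu_adj: "tar_adj (nu R S1) (nu R S2) \<longleftrightarrow> tar_adj S1 S2"
proof -
  have "symdiff (nu R S1) (nu R S2) = symdiff S1 S2" by (auto simp: nu_def symdiff_def)
  thus ?thesis unfolding tar_adj_def by simp
qed

lemma remove_finite:
  assumes "\<forall>T\<in>U'. \<forall>u\<in>T - W. T - {u} \<in> U'" "finite A" "A \<inter> W = {}" "T \<in> U'"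
  shows "T - A \<in> U'"
  using assms(2,3)
proof (induction A rule: finite_induct)
  case empty thus ?case using assms(4) by simp
next
  case (insert a A)
  hence IH: "T - A \<in> U'" by blast
  show ?case
  proof (cases "a \<in> T - A")
    case True
    have "a \<notin> W" using insert by blast
    hence "(T - A) - {a} \<in> U'" using assms(1) IH True by blast
    moreover have "T - insert a A = (T - A) - {a}" by blast
    ultimately show ?thesis by simp
  next
    case False
    hence "T - insert a A = T - A" by blast
    thus ?thesis using IH by simp
  qed
qed

theorem theorem2p10:
  fixes Xs :: "'v set \<Rightarrow> ('v \<times> 'v) set \<Rightarrow> 'v set set"
    and V V' :: "'v set" and E E' :: "('v \<times> 'v) set"
    and \<phi>t :: "'v set \<Rightarrow> 'v set"
  assumes "Xset_param Xs"
    and "sgraph V E" and "no_isolated V E"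
    and "sgraph V' E'" and "no_isolated V' E'"
    and "tar_iso Xs V E V' E' \<phi>t"
  shows "X_irrelevant_set Xs V' E' (V' - \<phi>t V)
    \<and> tar_iso Xs V E V' E' (nu (V' - \<phi>t V) \<circ> \<phi>t)
    \<and> (\<forall>S\<in>Xs V E. card ((nu (V' - \<phi>t V) \<circ> \<phi>t) S) = card S)"
proof -
  define U where "U = Xs V E"
  define U' where "U' = Xs V' E'"
  define W where "W = \<phi>t V"
  define R where "R = V' - W"
  have uU: "upfam V U" unfolding U_def by (rule upfam_of[OF assms(1-3)])
  have uU': "upfam V' U'" unfolding U'_def by (rule upfam_of[OF assms(1,4,5)])
  have iso: "isoU \<phi>t U U'" using assms(6) unfolding tar_iso_def isoU_def U_def U'_def .
  note M = main_abs[OF uU uU' iso, folded W_def]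
  note D = upfamD[OF uU] and D' = upfamD[OF uU']
  have bij: "bij_betw \<phi>t U U'" and adj: "\<forall>S1\<in>U. \<forall>S2\<in>U. tar_adj S1 S2 \<longleftrightarrow> tar_adj (\<phi>t S1) (\<phi>t S2)"
    using iso unfolding isoU_def by auto
  have inU': "\<And>x. x \<in> U \<Longrightarrow> \<phi>t x \<in> U'" using bij bij_betwE by blast
  have WU: "W \<in> U'" using inU' D(5) W_def by blast
  have WV: "W \<subseteq> V'" using D'(2) WU by blast
  have finR: "finite R" using D'(1) R_def by simp
  have irr: "X_irrelevant_set Xs V' E' R"
    unfolding X_irrelevant_set_def
  proof (intro conjI ballI)
    show "R \<subseteq> V'" unfolding R_def by blast
    fix v assume v: "v \<in> R"
    show "X_irrelevant_vertex Xs V' E' v"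
      unfolding X_irrelevant_vertex_def
    proof (intro conjI allI impI)
      show "v \<in> V'" using v R_def by blast
      fix S assume S: "minimal_Xset Xs V' E' S"
      show "v \<notin> S"
      proof
        assume vS: "v \<in> S"
        have SU: "S \<in> U'" using S unfolding minimal_Xset_def U'_def by blast
        have "v \<in> S - W" using vS v R_def by blast
        hence "S - {v} \<in> U'" using M(1) SU by blast
        moreover have "S - {v} \<subset> S" using vS by blast
        ultimately show False using S unfolding minimal_Xset_def U'_def by blast
      qed
    qed
  qed
  have nuU: "\<And>T. T \<in> U' \<Longrightarrow> nu R T \<in> U'"
  proof -
    fix T assume T: "T \<in> U'"
    have "T - R \<in> U'" using remove_finite[OF M(1) finR _ T] R_def by blast
    moreover have "T - R \<subseteq> nu R T" by (auto simp: nu_def symdiff_def)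
    moreover have "nu R T \<subseteq> V'" using D'(2)[OF T] R_def by (auto simp: nu_def symdiff_def)
    ultimately show "nu R T \<in> U'" by (rule D'(3))
  qed
  have bnu: "bij_betw (nu R) U' U'"
    by (rule bij_betw_byWitness[where f'="nu R"]) (auto simp: nu_invol nuU)
  have bij2: "bij_betw (nu R \<circ> \<phi>t) U U'" using bij_betw_trans[OF bij bnu] .
  have adj2: "\<forall>S1\<in>U. \<forall>S2\<in>U. tar_adj S1 S2 \<longleftrightarrow> tar_adj ((nu R \<circ> \<phi>t) S1) ((nu R \<circ> \<phi>t) S2)"
  proof (intro ballI)
    fix S1 S2 assume "S1 \<in> U" "S2 \<in> U"
    hence "tar_adj S1 S2 \<longleftrightarrow> tar_adj (\<phi>t S1) (\<phi>t S2)" using adj by blast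
    thus "tar_adj S1 S2 \<longleftrightarrow> tar_adj ((nu R \<circ> \<phi>t) S1) ((nu R \<circ> \<phi>t) S2)"
      unfolding comp_apply nu_adj .
  qed
  have iso2: "tar_iso Xs V E V' E' (nu R \<circ> \<phi>t)"
    unfolding tar_iso_def using bij2 adj2 unfolding U_def U'_def by (intro conjI)
  have cards: "\<forall>S\<in>U. card ((nu R \<circ> \<phi>t) S) = card S"
  proof
    fix S assume S: "S \<in> U"
    let ?T = "\<phi>t S"
    have TV: "?T \<subseteq> V'" using D'(2) inU'[OF S] by blast
    have un: "symdiff ?T R \<union> symdiff ?T W = V'" using TV WV R_def by (auto simp: symdiff_def)
    have dj: "symdiff ?T R \<inter> symdiff ?T W = {}" using R_def TV by (auto simp: symdiff_def)
    have f1: "finite (symdiff ?T R)" and f2: "finite (symdiff ?T W)"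
      using finite_subset[OF _ D'(1)] un by blast+
    have "card (symdiff ?T R) + card (symdiff ?T W) = card V'"
      using card_Un_disjoint[OF f1 f2 dj] un by simp
    moreover have "card (symdiff ?T W) = card (symdiff S V)" using M(3) S by blast
    moreover have "card (symdiff S V) = card (V - S)"
    proof -
      have "symdiff S V = V - S" using D(2)[OF S] by (auto simp: symdiff_def)
      thus ?thesis by simp
    qed
    moreover have "card (V - S) = card V - card S" using D(1) D(2)[OF S] by (simp add: card_Diff_subset finite_subset)
    moreover have "card S \<le> card V" using card_mono[OF D(1) D(2)[OF S]] .
    ultimately have "card (symdiff ?T R) = card S" using M(2) by linarith
    thus "card ((nu R \<circ> \<phi>t) S) = card S" by (simp add: nu_def)
  qed
  show ?thesis using irr iso2 cards unfolding R_def W_def U_def by blast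
qed

end
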